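(* Let $T$ be a bounded saturation theory, let $G$ and $E$ be finite sets of predicates of $T$, and let $\tau_e := \mathit{SDP}_T(G,E)$. Then for every subset $G' \subseteq G$, $[\tau_e]_{G'} = {\tt true}$ if and only if $\mathit{DP}_T(G' \cup \widetilde{E})$ returns UNSATISFIABLE.
   Context: A predicate is an atomic formula or its negation; a finite set of predicates is identified with the conjunction of its elements. The theory $T$ comes with inference rules; a rule instance is written $g \mathrel{:-} g_1,\dots,g_k$, meaning that $g$ (a predicate, or the contradiction symbol $\bot$) can be derived in one step from predicates $g_1,\dots,g_k$. For a set $H$ of predicates, $\widetilde{H} := \{\neg h : h \in H\}$. Saturation procedure $\mathrm{Sat}_N(H)$ (for a finite set $H$ of predicates and integer $N\ge 0$): (1) $W := H$. (2) Repeat $N$ times: set $W' := W$; for every predicate $g \notin W'$ for which there is a rule instance $g \mathrel{:-} g_1,\dots,g_k$ with all $g_j \in W'$, add $g$ to $W$. (3) If there is a rule instance $\bot \mathrel{:-} g_1,\dots,g_k$ with all $g_j\in W$, return UNSATISFIABLE, otherwise SATISFIABLE. $T$ is a bounded saturation theory if there is a function $d_T$ assigning to each finite set $H$ of predicates a natural number $d_T(H)$ such that for every $N \ge d_T(H)$, $\mathrm{Sat}_N(H)$ returns UNSATISFIABLE iff $H$ is unsatisfiable in $T$. Write $\mathit{DP}_T(H) := \mathrm{Sat}_{d_T(H)}(H)$ and, for a finite set $S$, $D_T(S) := \max\{d_T(S') : S' \subseteq S\}$. Symbolic decision procedure $\mathit{SDP}_T(G,E)$: introduce a Boolean variable $b_g$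 for each $g\in G$ (the set $B_G$). Let $N := D_T(G\cup\widetilde{E})$. (1) $W := G \cup \widetilde{E}$; set $\tau_{(g,0)} := b_g$ for $g\in G$ and $\tau_{(\neg e_i,0)} := {\tt true}$ for $e_i\in E$. (2) For $i = 1,\dots,N$: $W' := W$; set $S(g) := \emptyset$ for every predicate $g$; for every $g\in W'$ add $\tau_{(g,i-1)}$ to $S(g)$; for every predicate $g$ and every rule instance $g \mathrel{:-} g_1,\dots,g_k$ with all $g_m \in W'$, add the conjunction $\bigwedge_{m=1}^k \tau_{(g_m,i-1)}$ to $S(g)$ and add $g$ to $W$; then for each $g \in W$ set $\tau_{(g,i)} := \bigvee_{d\in S(g)} d$ and $\tau_{(g,\top)} := \tau_{(g,i)}$. (3) Let $S(e)$ be the set of conjunctions $\bigwedge_{m=1}^k \tau_{(g_m,\top)}$ over all rule instances $\bot \mathrel{:-} g_1,\dots,g_k$ with $\{g_1,\dots,g_k\}\subseteq W$, and set $\tau_e := \bigvee_{d\in S(e)} d$ (empty disjunction is ${\tt false}$). (4) Return $\tau_e$, a negation-free Boolean expression (with shared subexpressions) whose leaves are in $B_G$ or are constants. For a Boolean expression $\tau$ with leaves in $B_G$ and $G'\subseteq G$, $[\tau]_{G'}$ is the truth value of $\tau$ obtained by replacing each leaf $b_g$ by ${\tt true}$ if $g\in G'$ and ${\tt false}$ otherwise, with $\wedge,\vee$ interpreted as usual. *)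

theory Defs
  imports Main
begin

datatype 'a pred = Pos 'a | Neg 'a

fun negp :: "'a pred \<Rightarrow> 'a pred" where
  "negp (Pos a) = Neg a"
| "negp (Neg a) = Pos a"

definition tilde :: "'a pred set \<Rightarrow> 'a pred set" where
  "tilde H = negp ` H"

text \<open>A rule instance g :- g1,...,gk is a pair (c, [g1,...,gk]) where the conclusion c is
  Some g for a predicate g and None for the contradiction symbol bottom.\<close>
type_synonym 'a rule = "'a pred option \<times> 'a pred list"

fun satW :: "'a rule set \<Rightarrow> 'a pred set \<Rightarrow> nat \<Rightarrow> 'a pred set" where
  "satW R H 0 = H"
| "satW R H (Suc i) =
     satW R H i \<union> {g. \<exists>ps. (Some g, ps) \<in> R \<and> set ps \<subseteq> satW R H i}"

definition Sat_unsat :: "'a rule set \<Rightarrow> nat \<Rightarrow> 'a pred set \<Rightarrow> bool" where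
  "Sat_unsat R N H \<longleftrightarrow> (\<exists>ps. (None, ps) \<in> R \<and> set ps \<subseteq> satW R H N)"

definition bounded_saturation ::
    "'a rule set \<Rightarrow> ('a pred set \<Rightarrow> bool) \<Rightarrow> ('a pred set \<Rightarrow> nat) \<Rightarrow> bool" where
  "bounded_saturation R unsat d \<longleftrightarrow>
     (\<forall>H. finite H \<longrightarrow> (\<forall>N \<ge> d H. Sat_unsat R N H \<longleftrightarrow> unsat H))"

definition DP_unsat :: "'a rule set \<Rightarrow> ('a pred set \<Rightarrow> nat) \<Rightarrow> 'a pred set \<Rightarrow> bool" where
  "DP_unsat R d H \<longleftrightarrow> Sat_unsat R (d H) H"

definition DD :: "('a pred set \<Rightarrow> nat) \<Rightarrow> 'a pred set \<Rightarrow> nat" where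
  "DD d S = Max {d S' | S'. S' \<subseteq> S}"

text \<open>A negation-free Boolean expression over the variables b_g is represented by its
  meaning: a function from assignments of truth values to the variables b_g
  (indexed by the predicate g) to a truth value.\<close>
type_synonym 'a bexpr = "('a pred \<Rightarrow> bool) \<Rightarrow> bool"

definition bvar :: "'a pred \<Rightarrow> 'a bexpr" where "bvar g = (\<lambda>v. v g)"
definition bconst :: "bool \<Rightarrow> 'a bexpr" where "bconst b = (\<lambda>v. b)"
definition bconj :: "'a bexpr list \<Rightarrow> 'a bexpr" where "bconj ds = (\<lambda>v. \<forall>d\<in>set ds. d v)"
definition bdisj :: "'a bexpr set \<Rightarrow> 'a bexpr" where "bdisj S = (\<lambda>v. \<exists>d\<in>S. d v)"

definition beval :: "'a bexpr \<Rightarrow> 'a pred set \<Rightarrow> bool" where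
  "beval \<tau> G' = \<tau> (\<lambda>g. g \<in> G')"

text \<open>Step (1): tau_(g,0) = b_g for g in G, overwritten by true for
  g in tilde E; predicates outside W get the empty disjunction (false), which is
  never used.\<close>
fun sdp_tau :: "'a rule set \<Rightarrow> 'a pred set \<Rightarrow> 'a pred set \<Rightarrow> nat \<Rightarrow> 'a pred \<Rightarrow> 'a bexpr" where
  "sdp_tau R G E 0 g =
     (if g \<in> tilde E then bconst True else if g \<in> G then bvar g else bconst False)"
| "sdp_tau R G E (Suc i) g =
     bdisj ({sdp_tau R G E i g | _::unit. g \<in> satW R (G \<union> tilde E) i}
            \<union> {bconj (map (sdp_tau R G E i) ps) | ps.
                 (Some g, ps) \<in> R \<and> set ps \<subseteq> satW R (G \<union> tilde E) i})"

definition SDP :: "'a rule set \<Rightarrow> ('a pred set \<Rightarrow> nat) \<Rightarrow> 'a pred set \<Rightarrow> 'a pred set \<Rightarrow> 'a bexpr" where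
  "SDP R d G E =
    (let N = DD d (G \<union> tilde E) in
     bdisj {bconj (map (sdp_tau R G E N) ps) | ps.
              (None, ps) \<in> R \<and> set ps \<subseteq> satW R (G \<union> tilde E) N})"

end

theory Submission
  imports Defs
begin

lemma satW_mono: "H \<subseteq> H' \<Longrightarrow> satW R H i \<subseteq> satW R H' i"
  by (induction i) auto

lemma bdisj_img: "bdisj {f x | x. P x} v = (\<exists>x. P x \<and> f x v)"
  by (auto simp: bdisj_def)

lemma bdisj_un: "bdisj (A \<union> B) v = (bdisj A v \<or> bdisj B v)"
  by (auto simp: bdisj_def)

lemma bdisj_unit: "bdisj {f | _::unit. P} v = (P \<and> f v)"
  by (auto simp: bdisj_def)

lemma bconj_map: "bconj (map f ps) v = (\<forall>p\<in>set ps. f p v)"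
  by (simp add: bconj_def)

lemma tau_eval:
  assumes "G' \<subseteq> G"
  shows "sdp_tau R G E i g (\<lambda>g. g \<in> G') \<longleftrightarrow> g \<in> satW R (G' \<union> tilde E) i"
  using assms
proof (induction i arbitrary: g)
  case 0
  then show ?case by (auto simp: bconst_def bvar_def)
next
  case (Suc i)
  have sub: "satW R (G' \<union> tilde E) i \<subseteq> satW R (G \<union> tilde E) i"
    using Suc.prems by (intro satW_mono) auto
  have "sdp_tau R G E (Suc i) g (\<lambda>g. g \<in> G') \<longleftrightarrow>
     (g \<in> satW R (G \<union> tilde E) i \<and> g \<in> satW R (G' \<union> tilde E) i) \<or>
     (\<exists>ps. (Some g, ps) \<in> R \<and> set ps \<subseteq> satW R (G \<union> tilde E) i \<and>
        set ps \<subseteq> satW R (G' \<union> tilde E) i)"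
    (is "?L \<longleftrightarrow> ?R1 \<or> ?R2")
  proof -
    let ?v = "(\<lambda>g. g \<in> G')"
    let ?W = "satW R (G \<union> tilde E) i"
    have "?L \<longleftrightarrow> (g \<in> ?W \<and> sdp_tau R G E i g ?v) \<or>
       (\<exists>ps. (Some g, ps) \<in> R \<and> set ps \<subseteq> ?W \<and> (\<forall>p\<in>set ps. sdp_tau R G E i p ?v))"
      by (simp only: sdp_tau.simps bdisj_un bdisj_unit bdisj_img bconj_map conj_assoc)
    then show ?thesis by (simp add: Suc.IH[OF Suc.prems] Ball_def subset_iff)
  qed
  also have "\<dots> \<longleftrightarrow> g \<in> satW R (G' \<union> tilde E) (Suc i)"
    using sub by auto
  finally show ?case .
qed

theorem theorem3p3:
  fixes R :: "'a rule set" and unsat :: "'a pred set \<Rightarrow> bool"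
    and d :: "'a pred set \<Rightarrow> nat" and G E :: "'a pred set"
  assumes "bounded_saturation R unsat d"
    and "finite G" and "finite E"
  shows "\<forall>G' \<subseteq> G. beval (SDP R d G E) G' \<longleftrightarrow> DP_unsat R d (G' \<union> tilde E)"
proof (intro allI impI)
  fix G' assume G': "G' \<subseteq> G"
  define N where "N = DD d (G \<union> tilde E)"
  define H where "H = G' \<union> tilde E"
  have finH: "finite H" using assms G' unfolding H_def tilde_def
    by (meson finite_Un finite_imageI finite_subset)
  have fin: "finite {d S' | S'. S' \<subseteq> G \<union> tilde E}"
  proof -
    have "{d S' | S'. S' \<subseteq> G \<union> tilde E} = d ` Pow (G \<union> tilde E)" by auto
    moreover have "finite (G \<union> tilde E)" using assms unfolding tilde_def by auto
    ultimately show ?thesis by simp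
  qed
  have dN: "d H \<le> N" unfolding N_def DD_def H_def
    using G' by (intro Max_ge[OF fin]) auto
  have sub: "satW R H N \<subseteq> satW R (G \<union> tilde E) N"
    unfolding H_def using G' by (intro satW_mono) auto
  have "beval (SDP R d G E) G' \<longleftrightarrow> Sat_unsat R N H"
  proof -
    have "beval (SDP R d G E) G' \<longleftrightarrow> (\<exists>ps. (None, ps) \<in> R \<and> set ps \<subseteq> satW R (G \<union> tilde E) N
        \<and> (\<forall>p\<in>set ps. sdp_tau R G E N p (\<lambda>g. g \<in> G')))"
      unfolding beval_def SDP_def Let_def N_def[symmetric] by (simp only: bdisj_img bconj_map conj_assoc)
    also have "\<dots> \<longleftrightarrow> (\<exists>ps. (None, ps) \<in> R \<and> set ps \<subseteq> satW R H N)"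
      using sub tau_eval[OF G', of R E N] unfolding H_def by blast
    finally show ?thesis unfolding Sat_unsat_def .
  qed
  also have "\<dots> \<longleftrightarrow> unsat H"
    using assms(1) finH dN unfolding bounded_saturation_def by auto
  also have "\<dots> \<longleftrightarrow> DP_unsat R d H"
    using assms(1) finH unfolding bounded_saturation_def DP_unsat_def by auto
  finally show "beval (SDP R d G E) G' \<longleftrightarrow> DP_unsat R d (G' \<union> tilde E)"
    unfolding H_def .
qed

end
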